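(* Let $A$ be an arrangement of hyperplanes in general position in $\mathbb{R}^d$ and let $q\in\mathbb{R}^d$. Then (1) $\mathrm{RD}(A,q)=\mathrm{TD}(A^*_q,q)$; (2) $\mathrm{HTvD}(A,q)=\mathrm{TvD}(A^*_q,q)$; (3) $\mathrm{HED}(A,q)=\mathrm{ED}(A^*_q,q)$.
   Context: A hyperplane arrangement is a finite set of affine hyperplanes in $\mathbb{R}^d$. Regression depth $\mathrm{RD}(A,q)$: the minimum, over all closed rays emanating from $q$, of the number of hyperplanes of $A$ intersected by or parallel to the ray (a hyperplane containing $q$ is intersected by every ray from $q$). Hyperplane Tverberg depth $\mathrm{HTvD}(A,q)$: the maximum $r$ such that $A$ can be partitioned into $r$ parts with $q$ having regression depth $\ge 1$ with respect to each part. An arrangement $A$ $k$-encloses $q$ if $A$ can be partitioned into $d+1$ pairwise disjoint subsets $A_1,\dots,A_{d+1}$, each of size $k$, such that for every choice $h_1\in A_1,\dots,h_{d+1}\in A_{d+1}$ we have $\mathrm{RD}(\{h_1,\dots,h_{d+1}\},q)\ge 1$; the hyperplane enclosing depth $\mathrm{HED}(A,q)$ is the maximum $k$ such that some sub-arrangement of $A$ $k$-encloses $q$. Duality: for $h\in A$, let $p(h)$ be the point of $h$ closest to $q$; $A^*_q$ is the multiset $\{p(h): h\in A\}$ (hyperplanes through $q$ give copies of $q$). For a finite (multi)set $S$ of points and a point $q$: the Tukey depth $\mathrm{TD}(S,q)$ is the minimum number of points of $S$ in a closed half-space containing $q$; the Tverberg depth $\mathrm{TvD}(S,q)$ is the maximum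 $r$ such that $S$ can be partitioned into $r$ parts whose convex hulls all contain $q$; a point set $S'$ $k$-encloses $q$ if it can be partitioned into $d+1$ disjoint parts of size $k$ such that $q$ lies in the convex hull of every choice of one point from each part, and the enclosing depth $\mathrm{ED}(S,q)$ is the maximum $k$ such that some subset of $S$ $k$-encloses $q$. *)

theory Defs
  imports "HOL-Analysis.Analysis" "HOL-Library.Multiset" "HOL-Library.Disjoint_Sets"
begin

definition is_hyperplane :: "'a::euclidean_space set \<Rightarrow> bool" where
  "is_hyperplane h \<longleftrightarrow> (\<exists>a b. a \<noteq> 0 \<and> h = {x. a \<bullet> x = b})"

definition arrangement :: "'a::euclidean_space set set \<Rightarrow> bool" where
  "arrangement A \<longleftrightarrow> finite A \<and> (\<forall>h\<in>A. is_hyperplane h)"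

definition general_position :: "'a::euclidean_space set set \<Rightarrow> bool" where
  "general_position A \<longleftrightarrow>
     (\<forall>S\<subseteq>A. card S \<le> DIM('a) \<longrightarrow> aff_dim (\<Inter>S) = int DIM('a) - int (card S)) \<and>
     (\<forall>S\<subseteq>A. card S = DIM('a) + 1 \<longrightarrow> \<Inter>S = {})"

(* The closed ray from q in direction v (v \<noteq> 0) meets h, or is parallel to h. *)
definition ray_hits :: "'a::euclidean_space \<Rightarrow> 'a \<Rightarrow> 'a set \<Rightarrow> bool" where
  "ray_hits q v h \<longleftrightarrow> (\<exists>t::real. t \<ge> 0 \<and> q + t *\<^sub>R v \<in> h) \<or> (\<forall>x\<in>h. x + v \<in> h)"

definition RD :: "'a::euclidean_space set set \<Rightarrow> 'a \<Rightarrow> nat" where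
  "RD A q = Min ((\<lambda>v. card {h\<in>A. ray_hits q v h}) ` {v. v \<noteq> 0})"

definition HTvD :: "'a::euclidean_space set set \<Rightarrow> 'a \<Rightarrow> nat" where
  "HTvD A q = Max (insert 0 {r. \<exists>P. partition_on A P \<and> card P = r \<and> (\<forall>B\<in>P. RD B q \<ge> 1)})"

definition hyp_encloses :: "'a::euclidean_space set set \<Rightarrow> nat \<Rightarrow> 'a \<Rightarrow> bool" where
  "hyp_encloses A k q \<longleftrightarrow> (\<exists>F :: nat \<Rightarrow> 'a set set.
      (\<Union>i\<le>DIM('a). F i) = A \<and>
      (\<forall>i\<le>DIM('a). \<forall>j\<le>DIM('a). i \<noteq> j \<longrightarrow> F i \<inter> F j = {}) \<and>
      (\<forall>i\<le>DIM('a). card (F i) = k) \<and>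
      (\<forall>h :: nat \<Rightarrow> 'a set. (\<forall>i\<le>DIM('a). h i \<in> F i) \<longrightarrow> RD (h ` {..DIM('a)}) q \<ge> 1))"

definition HED :: "'a::euclidean_space set set \<Rightarrow> 'a \<Rightarrow> nat" where
  "HED A q = Max {k. \<exists>A'\<subseteq>A. hyp_encloses A' k q}"

(* Duality: A^*_q, the multiset of closest points to q. *)
definition dual_arr :: "'a::euclidean_space set set \<Rightarrow> 'a \<Rightarrow> 'a multiset" where
  "dual_arr A q = image_mset (\<lambda>h. closest_point h q) (mset_set A)"

definition TD :: "'a::euclidean_space multiset \<Rightarrow> 'a \<Rightarrow> nat" where
  "TD S q = Min ((\<lambda>(a, b). size (filter_mset (\<lambda>x. a \<bullet> x \<le> b) S)) `
                 {(a, b). a \<noteq> 0 \<and> a \<bullet> q \<le> b})"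

definition TvD :: "'a::euclidean_space multiset \<Rightarrow> 'a \<Rightarrow> nat" where
  "TvD S q = Max (insert 0 {r. \<exists>P :: 'a multiset multiset.
      sum_mset P = S \<and> size P = r \<and> (\<forall>B\<in>#P. q \<in> convex hull (set_mset B))})"

definition pt_encloses :: "'a::euclidean_space multiset \<Rightarrow> nat \<Rightarrow> 'a \<Rightarrow> bool" where
  "pt_encloses S k q \<longleftrightarrow> (\<exists>F :: nat \<Rightarrow> 'a multiset.
      (\<Sum>i\<le>DIM('a). F i) = S \<and>
      (\<forall>i\<le>DIM('a). size (F i) = k) \<and>
      (\<forall>p :: nat \<Rightarrow> 'a. (\<forall>i\<le>DIM('a). p i \<in># F i) \<longrightarrow> q \<in> convex hull (p ` {..DIM('a)})))"

definition ED :: "'a::euclidean_space multiset \<Rightarrow> 'a \<Rightarrow> nat" where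
  "ED S q = Max {k. \<exists>S'. S' \<subseteq># S \<and> pt_encloses S' k q}"

end

theory Submission
  imports Defs
begin

lemma cp_hyper:
  fixes a q :: "'a::euclidean_space"
  assumes "a \<noteq> 0"
  shows "closest_point {x. a \<bullet> x = b} q = q + ((b - a \<bullet> q) / (a \<bullet> a)) *\<^sub>R a"
proof -
  let ?c = "(b - a \<bullet> q) / (a \<bullet> a)"
  let ?x = "q + ?c *\<^sub>R a"
  have aa: "a \<bullet> a > 0" using assms by simp
  have xin: "a \<bullet> ?x = b" using aa by (simp add: inner_add_right field_simps)
  have "?x = closest_point {x. a \<bullet> x = b} q"
  proof (rule closest_point_unique)
    show "convex {x. a \<bullet> x = b}" by (rule convex_hyperplane)
    show "closed {x. a \<bullet> x = b}" by (rule closed_hyperplane)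
    show "?x \<in> {x. a \<bullet> x = b}" using xin by simp
    show "\<forall>z\<in>{x. a \<bullet> x = b}. dist q ?x \<le> dist q z"
    proof
      fix z assume "z \<in> {x. a \<bullet> x = b}"
      hence z: "a \<bullet> z = b" by simp
      have orth: "(z - ?x) \<bullet> (?x - q) = 0"
      proof -
        have "(z - ?x) \<bullet> a = 0" using z xin by (metis inner_commute inner_diff_right diff_self)
        moreover have "?x - q = ?c *\<^sub>R a" by simp
        ultimately show ?thesis by (simp only: inner_scaleR_right)
      qed
      have "(norm (z - q))\<^sup>2 = (norm ((z - ?x) + (?x - q)))\<^sup>2" by simp
      also have "\<dots> = (norm (z - ?x))\<^sup>2 + (norm (?x - q))\<^sup>2"
        by (rule norm_add_Pythagorean) (unfold orthogonal_def, rule orth)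
      finally have "(norm (?x - q))\<^sup>2 \<le> (norm (z - q))\<^sup>2" by (simp only: le_add_same_cancel2 zero_le_power2)
      hence "norm (?x - q) \<le> norm (z - q)" by (rule power2_le_imp_le) (rule norm_ge_zero)
      thus "dist q ?x \<le> dist q z" by (simp only: dist_norm norm_minus_commute)
    qed
  qed
  thus ?thesis by simp
qed

lemma hits_iff:
  fixes h :: "'a::euclidean_space set"
  assumes "is_hyperplane h"
  shows "ray_hits q v h \<longleftrightarrow> v \<bullet> (closest_point h q - q) \<ge> 0"
proof -
  obtain a b where ab: "a \<noteq> 0" "h = {x. a \<bullet> x = b}" using assms unfolding is_hyperplane_def by blast
  have aa: "a \<bullet> a > 0" using ab by simp
  define c where "c = (b - a \<bullet> q) / (a \<bullet> a)"
  have cp: "closest_point h q - q = c *\<^sub>R a" using cp_hyper[OF ab(1)] ab(2) c_def by simp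
  have x0: "q + c *\<^sub>R a \<in> h" using ab aa by (simp add: c_def inner_add_right field_simps)
  have par: "(\<forall>x\<in>h. x + v \<in> h) \<longleftrightarrow> a \<bullet> v = 0"
  proof
    assume "\<forall>x\<in>h. x + v \<in> h"
    hence "q + c *\<^sub>R a + v \<in> h" using x0 by blast
    thus "a \<bullet> v = 0" using x0 ab(2) by (simp add: inner_add_right)
  next
    assume "a \<bullet> v = 0" thus "\<forall>x\<in>h. x + v \<in> h" using ab(2) by (simp add: inner_add_right)
  qed
  have ray: "(\<exists>t::real. t \<ge> 0 \<and> q + t *\<^sub>R v \<in> h) \<longleftrightarrow> (\<exists>t::real. t \<ge> 0 \<and> t * (a \<bullet> v) = b - a \<bullet> q)"
    using ab(2) by (auto simp: inner_add_right algebra_simps)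
  have "v \<bullet> (closest_point h q - q) = (b - a \<bullet> q) * (a \<bullet> v) / (a \<bullet> a)"
    using cp by (simp add: c_def inner_commute)
  hence key: "v \<bullet> (closest_point h q - q) \<ge> 0 \<longleftrightarrow> (b - a \<bullet> q) * (a \<bullet> v) \<ge> 0"
    using aa by (simp add: zero_le_divide_iff) (use aa in linarith)
  show ?thesis
    unfolding ray_hits_def par ray key
  proof (cases "a \<bullet> v = 0")
    case False
    show "((\<exists>t::real. t \<ge> 0 \<and> t * (a \<bullet> v) = b - a \<bullet> q) \<or> a \<bullet> v = 0) \<longleftrightarrow> (b - a \<bullet> q) * (a \<bullet> v) \<ge> 0"
    proof
      assume "(\<exists>t::real. t \<ge> 0 \<and> t * (a \<bullet> v) = b - a \<bullet> q) \<or> a \<bullet> v = 0"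
      then obtain t where "t \<ge> 0" "t * (a \<bullet> v) = b - a \<bullet> q" using False by blast
      thus "(b - a \<bullet> q) * (a \<bullet> v) \<ge> 0" by (metis mult.assoc mult_nonneg_nonneg zero_le_square)
    next
      assume h: "(b - a \<bullet> q) * (a \<bullet> v) \<ge> 0"
      have "(b - a \<bullet> q) / (a \<bullet> v) \<ge> 0"
        using h False by (simp add: zero_le_divide_iff zero_le_mult_iff)
      moreover have "((b - a \<bullet> q) / (a \<bullet> v)) * (a \<bullet> v) = b - a \<bullet> q" using False by simp
      ultimately show "(\<exists>t::real. t \<ge> 0 \<and> t * (a \<bullet> v) = b - a \<bullet> q) \<or> a \<bullet> v = 0" by blast
    qed
  qed simp
qed


lemma ex_nonzero: "\<exists>v::'a::euclidean_space. v \<noteq> 0"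
  using nonzero_Basis SOME_Basis by blast

lemma hull_iff:
  fixes S :: "'a::euclidean_space set"
  assumes "finite S"
  shows "q \<in> convex hull S \<longleftrightarrow> (\<forall>v. v \<noteq> 0 \<longrightarrow> (\<exists>x\<in>S. v \<bullet> (x - q) \<ge> 0))"
proof
  assume q: "q \<in> convex hull S"
  show "\<forall>v. v \<noteq> 0 \<longrightarrow> (\<exists>x\<in>S. v \<bullet> (x - q) \<ge> 0)"
  proof (intro allI impI, rule ccontr)
    fix v :: 'a assume "v \<noteq> 0" "\<not> (\<exists>x\<in>S. v \<bullet> (x - q) \<ge> 0)"
    hence "S \<subseteq> {x. v \<bullet> x < v \<bullet> q}" by (auto simp: inner_diff_right)
    hence "convex hull S \<subseteq> {x. v \<bullet> x < v \<bullet> q}"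
      by (intro hull_minimal) (auto intro: convex_halfspace_lt)
    thus False using q by auto
  qed
next
  assume h: "\<forall>v. v \<noteq> 0 \<longrightarrow> (\<exists>x\<in>S. v \<bullet> (x - q) \<ge> 0)"
  show "q \<in> convex hull S"
  proof (rule ccontr)
    assume nq: "q \<notin> convex hull S"
    have "compact (convex hull S)" using assms by (simp add: compact_convex_hull finite_imp_compact)
    then obtain a b where ab: "a \<bullet> q < b" "\<forall>x\<in>convex hull S. a \<bullet> x > b"
      using separating_hyperplane_closed_point[OF convex_convex_hull _ nq] compact_imp_closed by blast
    show False
    proof (cases "S = {}")
      case True
      obtain v :: 'a where "v \<noteq> 0" using ex_nonzero by blast
      thus False using h True by blast
    next
      case False
      then obtain y where y: "y \<in> S" by blast
      hence "a \<bullet> y > b" using ab(2) hull_inc[of y S convex] by blast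
      hence "a \<noteq> 0" using ab(1) by auto
      hence "-a \<noteq> 0" by simp
      then obtain x where x: "x \<in> S" "(-a) \<bullet> (x - q) \<ge> 0" using h by blast
      have "a \<bullet> x > b" using x(1) ab(2) hull_inc[of x S convex] by blast
      thus False using x(2) ab(1) by (simp add: inner_diff_right)
    qed
  qed
qed

definition cnt :: "'a::euclidean_space set set \<Rightarrow> 'a \<Rightarrow> 'a \<Rightarrow> nat" where
  "cnt B q v = card {h\<in>B. v \<bullet> (closest_point h q - q) \<ge> 0}"

lemma RD_alt:
  assumes "\<forall>h\<in>B. is_hyperplane h"
  shows "RD B q = Min (cnt B q ` {v. v \<noteq> 0})"
  unfolding RD_def cnt_def using hits_iff assms
  by (intro arg_cong[where f=Min] image_cong refl arg_cong[where f=card] Collect_cong) blast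

lemma cnt_finite: "finite B \<Longrightarrow> finite (cnt B q ` X)"
proof -
  assume "finite B"
  have "cnt B q ` X \<subseteq> {..card B}" unfolding cnt_def using \<open>finite B\<close>
    by (auto intro!: card_mono)
  thus ?thesis using finite_subset by blast
qed

lemma RD_ge1:
  assumes "finite B" "\<forall>h\<in>B. is_hyperplane h"
  shows "RD B q \<ge> 1 \<longleftrightarrow> q \<in> convex hull ((\<lambda>h. closest_point h q) ` B)"
proof -
  have ne: "cnt B q ` {v. v \<noteq> 0} \<noteq> {}" using ex_nonzero by blast
  have "RD B q \<ge> 1 \<longleftrightarrow> (\<forall>v. v \<noteq> 0 \<longrightarrow> cnt B q v \<ge> 1)"
    unfolding RD_alt[OF assms(2)] using Min_ge_iff[OF cnt_finite[OF assms(1)] ne] by auto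
  also have "\<dots> \<longleftrightarrow> (\<forall>v. v \<noteq> 0 \<longrightarrow> (\<exists>h\<in>B. v \<bullet> (closest_point h q - q) \<ge> 0))"
  proof -
    have "cnt B q v \<ge> 1 \<longleftrightarrow> (\<exists>h\<in>B. v \<bullet> (closest_point h q - q) \<ge> 0)" for v
      unfolding cnt_def using assms(1) by (auto simp: Suc_le_eq card_gt_0_iff)
    thus ?thesis by simp
  qed
  also have "\<dots> \<longleftrightarrow> q \<in> convex hull ((\<lambda>h. closest_point h q) ` B)"
    using hull_iff[of "(\<lambda>h. closest_point h q) ` B" q] assms(1) by auto
  finally show ?thesis .
qed

lemma size_filter_dual:
  assumes "finite A"
  shows "size (filter_mset P (dual_arr A q)) = card {h\<in>A. P (closest_point h q)}"
  unfolding dual_arr_def filter_mset_image_mset using assms by simp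

lemma part1:
  assumes "arrangement A"
  shows "RD A q = TD (dual_arr A q) q"
proof -
  have fin: "finite A" and hyp: "\<forall>h\<in>A. is_hyperplane h" using assms by (auto simp: arrangement_def)
  define T where "T = (\<lambda>(a, b). size (filter_mset (\<lambda>x. a \<bullet> x \<le> b) (dual_arr A q))) `
                 {(a::'a, b). a \<noteq> 0 \<and> a \<bullet> q \<le> b}"
  have TDe: "TD (dual_arr A q) q = Min T" unfolding TD_def T_def by simp
  have RDe: "RD A q = Min (cnt A q ` {v. v \<noteq> 0})" using RD_alt[OF hyp] .
  have T_eq: "T = (\<lambda>(a, b). card {h\<in>A. a \<bullet> closest_point h q \<le> b}) ` {(a::'a, b). a \<noteq> 0 \<and> a \<bullet> q \<le> b}"
    unfolding T_def using size_filter_dual[OF fin] by (intro image_cong refl) auto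
  have Tfin: "finite T" 
  proof -
    have "T \<subseteq> {..card A}" unfolding T_eq using fin by (auto intro!: card_mono)
    thus ?thesis using finite_subset by blast
  qed
  have cntT: "cnt A q v = card {h\<in>A. (-v) \<bullet> closest_point h q \<le> (-v) \<bullet> q}" for v
    unfolding cnt_def by (intro arg_cong[where f=card]) (auto simp: inner_diff_right)
  have sub: "cnt A q ` {v. v \<noteq> 0} \<subseteq> T"
  proof
    fix n assume "n \<in> cnt A q ` {v. v \<noteq> 0}"
    then obtain v where v: "v \<noteq> 0" "n = cnt A q v" by blast
    show "n \<in> T" unfolding T_eq cntT v(2) using v(1)
      by (intro image_eqI[where x="(-v, (-v) \<bullet> q)"]) auto
  qed
  have ne: "cnt A q ` {v. v \<noteq> 0} \<noteq> {}" using ex_nonzero by blast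
  have le1: "Min T \<le> Min (cnt A q ` {v. v \<noteq> 0})"
    using Min_antimono[OF sub ne Tfin] .
  define m where "m = Min T"
  have "m \<in> T" unfolding m_def using Tfin sub ne by (intro Min_in) auto
  hence "m \<in> (\<lambda>(a, b). card {h\<in>A. a \<bullet> closest_point h q \<le> b}) ` {(a::'a, b). a \<noteq> 0 \<and> a \<bullet> q \<le> b}"
    using T_eq by simp
  then obtain x where x: "x \<in> {(a::'a, b). a \<noteq> 0 \<and> a \<bullet> q \<le> b}" 
    "m = (\<lambda>(a, b). card {h\<in>A. a \<bullet> closest_point h q \<le> b}) x" by (rule imageE)
  obtain a b where xab: "x = (a, b)" by (cases x)
  have ab: "a \<noteq> 0" "a \<bullet> q \<le> b" "m = card {h\<in>A. a \<bullet> closest_point h q \<le> b}"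
    using x unfolding xab by auto
  have "cnt A q (-a) \<le> m" unfolding cntT ab(3) using fin ab(2)
    by (intro card_mono) auto
  moreover have "Min (cnt A q ` {v. v \<noteq> 0}) \<le> cnt A q (-a)"
    using ab(1) cnt_finite[OF fin] by (intro Min_le) auto
  ultimately show ?thesis using TDe RDe le1 m_def by (metis le_antisym order_trans)
qed


lemma lift_sum_mset:
  "sum_mset Q = image_mset f N \<Longrightarrow> \<exists>Q'. image_mset (image_mset f) Q' = Q \<and> sum_mset Q' = N"
proof (induction Q arbitrary: N)
  case empty
  thus ?case by (intro exI[of _ "{#}"]) simp
next
  case (add B Q)
  hence "image_mset f N = B + sum_mset Q" by simp
  then obtain B' C' where "N = B' + C'" "B = image_mset f B'" "sum_mset Q = image_mset f C'"
    using image_mset_eq_plusD by blast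
  moreover obtain Q0 where "image_mset (image_mset f) Q0 = Q" "sum_mset Q0 = C'"
    using add.IH calculation(3) by blast
  ultimately show ?case by (intro exI[of _ "add_mset B' Q0"]) simp
qed

lemma mset_set_set_mset_le1:
  "(\<And>x. count M x \<le> 1) \<Longrightarrow> mset_set (set_mset M) = M"
proof (rule multiset_eqI)
  fix x assume h: "\<And>x. count M x \<le> 1"
  show "count (mset_set (set_mset M)) x = count M x"
  proof (cases "x \<in># M")
    case True
    hence "count M x > 0" by simp
    hence "count M x = 1" using h[of x] by linarith
    thus ?thesis using True by (simp add: count_mset_set)
  next
    case False
    thus ?thesis by (simp add: count_mset_set not_in_iff)
  qed
qed

lemma count_mset_set_le1: "count (mset_set A) x \<le> 1"
  by (simp add: count_mset_set')

lemma image_mset_sum': "image_mset f (sum g P) = sum (\<lambda>x. image_mset f (g x)) P"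
  by (induct P rule: infinite_finite_induct) auto

lemma sum_mset_set_disjoint:
  assumes "finite P" "\<forall>B\<in>P. finite B" "disjoint P"
  shows "(\<Sum>B\<in>P. mset_set B) = mset_set (\<Union>P)"
  using assms
proof (induction P rule: finite_induct)
  case empty thus ?case by simp
next
  case (insert B P)
  have dP: "disjoint P" using insert.prems(2) by (simp add: pairwise_insert)
  have "B \<inter> \<Union>P = {}" using insert.prems(2) insert.hyps(2)
    by (auto simp: pairwise_insert disjnt_def)
  moreover have "finite (\<Union>P)" using insert.hyps(1) insert.prems(1) by auto
  ultimately show ?case using insert.hyps insert.IH[OF _ dP] insert.prems(1)
    by (simp add: mset_set_Union)
qed

lemma mpart_to_part:
  assumes "\<forall>B\<in>#Q'. B \<noteq> {#}" "sum_mset Q' = mset_set A" "finite A"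
  shows "partition_on A (set_mset (image_mset set_mset Q')) \<and> card (set_mset (image_mset set_mset Q')) = size Q'"
  using assms
proof (induction Q' arbitrary: A)
  case empty
  hence "A = {}" by (metis mset_set_empty_iff sum_mset.empty)
  thus ?case by (simp add: partition_on_empty)
next
  case (add B R)
  have eq: "B + sum_mset R = mset_set A" using add.prems(2) by simp
  define A2 where "A2 = A - set_mset B"
  have cnt: "count B x + count (sum_mset R) x = count (mset_set A) x" for x
    using eq by (metis count_union)
  have R2: "sum_mset R = mset_set A2"
  proof (rule multiset_eqI)
    fix x
    show "count (sum_mset R) x = count (mset_set A2) x"
      using cnt[of x] add.prems(3) unfolding A2_def
      by (cases "x \<in> A"; cases "count B x = 0") (auto simp: count_mset_set' simp flip: count_greater_zero_iff)
  qed
  have BA: "set_mset B \<subseteq> A"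
  proof
    fix x assume "x \<in># B"
    hence "count B x > 0" by simp
    hence "count (mset_set A) x > 0" using cnt[of x] by linarith
    thus "x \<in> A" by (simp add: count_mset_set' split: if_splits)
  qed
  have IH: "partition_on A2 (set_mset (image_mset set_mset R)) \<and> card (set_mset (image_mset set_mset R)) = size R"
    using add.IH[of A2] add.prems(1) R2 add.prems(3) unfolding A2_def by auto
  have Bne: "set_mset B \<noteq> {}" using add.prems(1) by simp
  have U: "\<Union>(set_mset (image_mset set_mset R)) = A2" using IH by (simp add: partition_on_def)
  have dj: "disjnt (set_mset B) (\<Union>(set_mset (image_mset set_mset R)))"
    unfolding U A2_def by (auto simp: disjnt_def)
  have notin: "set_mset B \<notin> set_mset (image_mset set_mset R)"
  proof
    assume "set_mset B \<in> set_mset (image_mset set_mset R)"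
    hence "set_mset B \<subseteq> A2" using U by blast
    thus False using Bne unfolding A2_def by blast
  qed
  have "partition_on A (insert (set_mset B) (set_mset (image_mset set_mset R)))"
    using partition_on_insert[OF dj] IH BA Bne unfolding A2_def by simp
  moreover have "card (insert (set_mset B) (set_mset (image_mset set_mset R))) = Suc (size R)"
    using notin IH by simp
  ultimately show ?case by simp
qed

lemma part2:
  assumes "arrangement A"
  shows "HTvD A q = TvD (dual_arr A q) q"
proof -
  have fin: "finite A" and hyp: "\<forall>h\<in>A. is_hyperplane h" using assms by (auto simp: arrangement_def)
  let ?p = "\<lambda>h. closest_point h q"
  have "{r. \<exists>P. partition_on A P \<and> card P = r \<and> (\<forall>B\<in>P. RD B q \<ge> 1)} =
        {r. \<exists>Q :: 'a multiset multiset. sum_mset Q = dual_arr A q \<and> size Q = r \<and> (\<forall>B\<in>#Q. q \<in> convex hull (set_mset B))}"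
    (is "?L = ?R")
  proof
    show "?L \<subseteq> ?R"
    proof
      fix r assume "r \<in> ?L"
      then obtain P where P: "partition_on A P" "card P = r" "\<forall>B\<in>P. RD B q \<ge> 1" by blast
      have PA: "\<forall>B\<in>P. B \<subseteq> A" using P(1) by (auto simp: partition_on_def)
      have finP: "finite P" using P(1) fin by (meson finite_elements)
      have finB: "\<forall>B\<in>P. finite B" using PA fin finite_subset by blast
      define Q where "Q = image_mset (\<lambda>B. image_mset ?p (mset_set B)) (mset_set P)"
      have "sum_mset Q = (\<Sum>B\<in>P. image_mset ?p (mset_set B))"
        unfolding Q_def by (simp add: sum_unfold_sum_mset)
      also have "\<dots> = image_mset ?p (\<Sum>B\<in>P. mset_set B)" by (simp add: image_mset_sum')
      also have "\<dots> = image_mset ?p (mset_set A)"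
        using sum_mset_set_disjoint[OF finP finB] P(1) by (simp add: partition_on_def)
      finally have sQ: "sum_mset Q = dual_arr A q" unfolding dual_arr_def .
      have "size Q = r" unfolding Q_def using P(2) by simp
      moreover have "\<forall>B\<in>#Q. q \<in> convex hull (set_mset B)"
      proof
        fix B' assume "B' \<in># Q"
        then obtain B where B: "B \<in> P" "B' = image_mset ?p (mset_set B)" unfolding Q_def using finP by auto
        have "set_mset B' = ?p ` B" using B finB by simp
        moreover have "\<forall>h\<in>B. is_hyperplane h" using B(1) PA hyp by blast
        ultimately show "q \<in> convex hull (set_mset B')" using RD_ge1[of B q] B(1) finB P(3) by auto
      qed
      ultimately show "r \<in> ?R" using sQ by blast
    qed
  next
    show "?R \<subseteq> ?L"
    proof
      fix r assume "r \<in> ?R"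
      then obtain Q :: "'a multiset multiset" where Q: "sum_mset Q = image_mset ?p (mset_set A)" "size Q = r"
          "\<forall>B\<in>#Q. q \<in> convex hull (set_mset B)" unfolding dual_arr_def by blast
      obtain Q' where Q': "image_mset (image_mset ?p) Q' = Q" "sum_mset Q' = mset_set A"
        using lift_sum_mset[OF Q(1)] by blast
      have ne: "\<forall>B\<in>#Q'. B \<noteq> {#}"
      proof
        fix B assume "B \<in># Q'"
        hence "image_mset ?p B \<in># Q" using Q'(1) by force
        hence "q \<in> convex hull (set_mset (image_mset ?p B))" using Q(3) by blast
        thus "B \<noteq> {#}" by auto
      qed
      define P where "P = set_mset (image_mset set_mset Q')"
      have P: "partition_on A P" "card P = size Q'" using mpart_to_part[OF ne Q'(2) fin] P_def by auto
      have "size Q' = r" using Q(2) Q'(1) by auto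
      moreover have "\<forall>B\<in>P. RD B q \<ge> 1"
      proof
        fix B assume "B \<in> P"
        then obtain B' where B': "B' \<in># Q'" "B = set_mset B'" unfolding P_def by auto
        have BA: "B \<subseteq> A" using P(1) \<open>B \<in> P\<close> by (auto simp: partition_on_def)
        have "image_mset ?p B' \<in># Q" using Q'(1) B'(1) by force
        hence "q \<in> convex hull (?p ` B)" using Q(3) B'(2) by auto
        moreover have "\<forall>h\<in>B. is_hyperplane h" using BA hyp by blast
        ultimately show "RD B q \<ge> 1" using RD_ge1[of B q] B'(2) by auto
      qed
      ultimately show "r \<in> ?L" using P by blast
    qed
  qed
  thus ?thesis unfolding HTvD_def TvD_def by simp
qed


lemma lift_sum_idx:
  "(\<Sum>i<(n::nat). G i) = image_mset f N \<Longrightarrow> \<exists>F. (\<Sum>i<n. F i) = N \<and> (\<forall>i<n. image_mset f (F i) = G i)"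
proof (induction n arbitrary: N)
  case 0
  thus ?case by (intro exI[of _ "\<lambda>_. {#}"]) simp
next
  case (Suc n)
  hence "image_mset f N = (\<Sum>i<n. G i) + G n" by simp
  then obtain B' C' where BC: "N = B' + C'" "(\<Sum>i<n. G i) = image_mset f B'" "G n = image_mset f C'"
    using image_mset_eq_plusD by blast
  obtain F where F: "(\<Sum>i<n. F i) = B'" "\<forall>i<n. image_mset f (F i) = G i"
    using Suc.IH[OF BC(2)] by blast
  define F' where "F' = F(n := C')"
  have "(\<Sum>i<n. F' i) = (\<Sum>i<n. F i)" unfolding F'_def by (intro sum.cong) auto
  hence "(\<Sum>i<Suc n. F' i) = N" using F(1) BC(1) by (simp add: F'_def)
  moreover have "\<forall>i<Suc n. image_mset f (F' i) = G i"
    using F(2) BC(3) unfolding F'_def by (auto simp: less_Suc_eq)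
  ultimately show ?case by blast
qed

lemma sum_mset_set_indexed:
  assumes "finite I" "\<forall>i\<in>I. finite (F i)" "\<forall>i\<in>I. \<forall>j\<in>I. i \<noteq> j \<longrightarrow> F i \<inter> F j = {}"
  shows "(\<Sum>i\<in>I. mset_set (F i)) = mset_set (\<Union>i\<in>I. F i)"
  using assms
proof (induction I rule: finite_induct)
  case empty thus ?case by simp
next
  case (insert i I)
  have dj: "F i \<inter> (\<Union>j\<in>I. F j) = {}"
  proof -
    have "\<forall>j\<in>I. F i \<inter> F j = {}" using insert.prems(2) insert.hyps(2) by fastforce
    thus ?thesis by blast
  qed
  have f1: "finite (\<Union>j\<in>I. F j)" using insert.hyps(1) insert.prems(1) by simp
  have f2: "finite (F i)" using insert.prems(1) by simp
  have IH: "(\<Sum>j\<in>I. mset_set (F j)) = mset_set (\<Union>j\<in>I. F j)"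
    using insert.IH insert.prems by simp
  have "(\<Sum>j\<in>insert i I. mset_set (F j)) = mset_set (F i) + (\<Sum>j\<in>I. mset_set (F j))"
    using insert.hyps by simp
  also have "\<dots> = mset_set (F i \<union> (\<Union>j\<in>I. F j))" unfolding IH using mset_set_Union[OF f2 f1 dj] by simp
  finally show ?case by simp
qed

lemma part3:
  assumes "arrangement A"
  shows "HED A q = ED (dual_arr A q) q"
proof -
  have fin: "finite A" and hyp: "\<forall>h\<in>A. is_hyperplane h" using assms by (auto simp: arrangement_def)
  let ?p = "\<lambda>h. closest_point h q"
  let ?D = "DIM('a)"
  have "{k. \<exists>A'\<subseteq>A. hyp_encloses A' k q} = {k. \<exists>S'. S' \<subseteq># dual_arr A q \<and> pt_encloses S' k q}"
    (is "?L = ?R")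
  proof
    show "?L \<subseteq> ?R"
    proof
      fix k assume "k \<in> ?L"
      then obtain A' F where A': "A' \<subseteq> A" and F: "(\<Union>i\<le>?D. F i) = A'"
        "\<forall>i\<le>?D. \<forall>j\<le>?D. i \<noteq> j \<longrightarrow> F i \<inter> F j = {}" "\<forall>i\<le>?D. card (F i) = k"
        "\<forall>h :: nat \<Rightarrow> 'a set. (\<forall>i\<le>?D. h i \<in> F i) \<longrightarrow> RD (h ` {..?D}) q \<ge> 1"
        unfolding hyp_encloses_def by blast
      have finA': "finite A'" using A' fin finite_subset by blast
      have finF: "\<forall>i\<le>?D. finite (F i)" using F(1) finA' by (metis UN_upper atMost_iff finite_subset)
      define S' where "S' = image_mset ?p (mset_set A')"
      define G where "G = (\<lambda>i. image_mset ?p (mset_set (F i)))"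
      have "S' \<subseteq># dual_arr A q" unfolding S'_def dual_arr_def
        using A' fin by (intro image_mset_subseteq_mono subset_imp_msubset_mset_set)
      moreover have "pt_encloses S' k q"
        unfolding pt_encloses_def
      proof (intro exI[of _ G] conjI allI impI)
        have "(\<Sum>i\<le>?D. G i) = image_mset ?p (\<Sum>i\<le>?D. mset_set (F i))"
          unfolding G_def by (simp add: image_mset_sum')
        also have "\<dots> = S'" unfolding S'_def
          using sum_mset_set_indexed[of "{..?D}" F] finF F(1,2) by simp
        finally show "(\<Sum>i\<le>?D. G i) = S'" .
      next
        fix i assume "i \<le> ?D"
        thus "size (G i) = k" unfolding G_def using F(3) by simp
      next
        fix p' :: "nat \<Rightarrow> 'a" assume hp: "\<forall>i\<le>?D. p' i \<in># G i"
        have "\<forall>i. \<exists>h. i \<le> ?D \<longrightarrow> h \<in> F i \<and> p' i = ?p h"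
          using hp finF unfolding G_def by auto
        then obtain h where h: "\<forall>i. i \<le> ?D \<longrightarrow> h i \<in> F i \<and> p' i = ?p (h i)"
          by metis
        have RDh: "RD (h ` {..?D}) q \<ge> 1" using F(4) h by blast
        have hA: "h ` {..?D} \<subseteq> A" using h F(1) A' by blast
        have "q \<in> convex hull (?p ` h ` {..?D})"
          using RD_ge1[of "h ` {..?D}" q] RDh hA hyp by auto
        moreover have "?p ` h ` {..?D} = p' ` {..?D}" using h by force
        ultimately show "q \<in> convex hull (p' ` {..?D})" by simp
      qed
      ultimately show "k \<in> ?R" by blast
    qed
  next
    show "?R \<subseteq> ?L"
    proof
      fix k assume "k \<in> ?R"
      then obtain S' G where S': "S' \<subseteq># dual_arr A q" and G: "(\<Sum>i\<le>?D. G i) = S'"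
        "\<forall>i\<le>?D. size (G i) = k"
        "\<forall>p' :: nat \<Rightarrow> 'a. (\<forall>i\<le>?D. p' i \<in># G i) \<longrightarrow> q \<in> convex hull (p' ` {..?D})"
        unfolding pt_encloses_def by blast
      obtain C where "image_mset ?p (mset_set A) = S' + C"
        using S' unfolding dual_arr_def mset_subset_eq_exists_conv by blast
      then obtain B' C' where BC: "mset_set A = B' + C'" "S' = image_mset ?p B'"
        using image_mset_eq_plusD by blast
      have cB: "count B' x \<le> count (mset_set A) x" for x using BC(1) by simp
      define A' where "A' = set_mset B'"
      have cB1: "count B' x \<le> 1" for x using cB[of x] count_mset_set_le1[of A x] by linarith
      have B'eq: "mset_set A' = B'" unfolding A'_def
        by (intro mset_set_set_mset_le1 cB1)
      have A'A: "A' \<subseteq> A"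
      proof
        fix x assume "x \<in> A'"
        hence "count B' x > 0" unfolding A'_def by simp
        hence "count (mset_set A) x > 0" using cB[of x] by linarith
        thus "x \<in> A" by (simp add: count_mset_set' split: if_splits)
      qed
      have "(\<Sum>i<Suc ?D. G i) = image_mset ?p B'" using G(1) BC(2) by (simp add: lessThan_Suc_atMost)
      then obtain F' where F': "(\<Sum>i<Suc ?D. F' i) = B'" "\<forall>i<Suc ?D. image_mset ?p (F' i) = G i"
        using lift_sum_idx by blast
      have F'sum: "(\<Sum>i\<le>?D. F' i) = B'" using F'(1) by (simp add: lessThan_Suc_atMost)
      have F'img: "\<forall>i\<le>?D. image_mset ?p (F' i) = G i" using F'(2) by auto
      have cnt_le: "count (F' i) x \<le> count B' x" if "i \<le> ?D" for i x
      proof -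
        have "count B' x = (\<Sum>j\<le>?D. count (F' j) x)" unfolding F'sum[symmetric] by (simp add: count_sum)
        moreover have "count (F' i) x \<le> (\<Sum>j\<le>?D. count (F' j) x)"
          using that by (intro member_le_sum) auto
        ultimately show ?thesis by simp
      qed
      define F where "F = (\<lambda>i. set_mset (F' i))"
      have Feq: "mset_set (F i) = F' i" if "i \<le> ?D" for i
        unfolding F_def using cnt_le[OF that] cB1 by (intro mset_set_set_mset_le1) (meson le_trans)
      have "hyp_encloses A' k q"
        unfolding hyp_encloses_def
      proof (intro exI[of _ F] conjI allI impI)
        show "(\<Union>i\<le>?D. F i) = A'" unfolding F_def A'_def F'sum[symmetric]
          by (simp add: set_mset_sum)
      next
        fix i j assume ij: "i \<le> ?D" "j \<le> ?D" "i \<noteq> j"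
        show "F i \<inter> F j = {}"
        proof (rule ccontr)
          assume "F i \<inter> F j \<noteq> {}"
          then obtain x where x: "x \<in># F' i" "x \<in># F' j" unfolding F_def by blast
          have "count B' x = (\<Sum>l\<le>?D. count (F' l) x)" unfolding F'sum[symmetric] by (simp add: count_sum)
          moreover have "(\<Sum>l\<in>{i,j}. count (F' l) x) \<le> (\<Sum>l\<le>?D. count (F' l) x)"
            using ij by (intro sum_mono2) auto
          moreover have "(\<Sum>l\<in>{i,j}. count (F' l) x) = count (F' i) x + count (F' j) x"
            using ij(3) by simp
          moreover have "count (F' i) x \<ge> 1" "count (F' j) x \<ge> 1" using x by auto
          ultimately show False using cB1[of x] by linarith
        qed
      next
        fix i assume i: "i \<le> ?D"
        have "card (F i) = size (mset_set (F i))" by simp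
        also have "\<dots> = size (G i)" using Feq[OF i] F'img i by (metis size_image_mset)
        finally show "card (F i) = k" using G(2) i by simp
      next
        fix h :: "nat \<Rightarrow> 'a set" assume h: "\<forall>i\<le>?D. h i \<in> F i"
        define p' where "p' = (\<lambda>i. ?p (h i))"
        have "\<forall>i\<le>?D. p' i \<in># G i"
        proof (intro allI impI)
          fix i assume i: "i \<le> ?D"
          have "h i \<in># F' i" using h i unfolding F_def by blast
          hence "p' i \<in># image_mset ?p (F' i)" unfolding p'_def by simp
          thus "p' i \<in># G i" using F'img i by simp
        qed
        hence "q \<in> convex hull (p' ` {..?D})" using G(3) by blast
        moreover have "p' ` {..?D} = ?p ` h ` {..?D}" unfolding p'_def by force
        moreover have "h ` {..?D} \<subseteq> A"
        proof
          fix y assume "y \<in> h ` {..?D}"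
          then obtain i where i: "i \<le> ?D" "y = h i" by blast
          hence "y \<in># F' i" using h unfolding F_def by blast
          hence "count (F' i) y > 0" by simp
          hence "count B' y > 0" using cnt_le[OF i(1), of y] by linarith
          thus "y \<in> A" using A'A unfolding A'_def by auto
        qed
        ultimately show "RD (h ` {..?D}) q \<ge> 1"
          using RD_ge1[of "h ` {..?D}" q] hyp by auto
      qed
      thus "k \<in> ?L" using A'A by blast
    qed
  qed
  thus ?thesis unfolding HED_def ED_def by simp
qed

theorem corollary2p2:
  fixes A :: "'a::euclidean_space set set" and q :: 'a
  assumes "arrangement A" and "general_position A"
  shows "RD A q = TD (dual_arr A q) q \<and>
         HTvD A q = TvD (dual_arr A q) q \<and>
         HED A q = ED (dual_arr A q) q"
  using part1[OF assms(1)] part2[OF assms(1)] part3[OF assms(1)] by blast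

end
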